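(* Let $N,M$ be positive integers, let $\mathscr{A}\subset\mathscr{M}(N,M)$ and $\mathscr{B}\subset\mathscr{M}(M,N)$ be finite sets of real matrices, and let $\|\cdot\|$ be a submultiplicative norm on $\mathscr{M}(N,N)$. Suppose that for every sequence $\{A_n\}_{n\ge1}$ with $A_n\in\mathscr{A}$ there exists a sequence $\{B_n\}_{n\ge1}$ with $B_n\in\mathscr{B}$ such that $\|A_nB_n\cdots A_1B_1\|\to0$ as $n\to\infty$. Then there exist a positive integer $k_*$ and a constant $\mu\in(0,1)$ such that for every sequence $\{A_n\in\mathscr{A}\}$ there exist a positive integer $k\le k_*$ and matrices $B_1,\ldots,B_k\in\mathscr{B}$ with $\|A_kB_k\cdots A_1B_1\|\le\mu$.
   Context: $\mathscr{M}(p,q)$ denotes the space of $p\times q$ real matrices with the topology of elementwise convergence. A norm on $\mathscr{M}(N,N)$ is submultiplicative if $\|XY\|\le\|X\|\,\|Y\|$ for all $X,Y$. *)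

theory Defs
  imports "HOL-Analysis.Analysis"
begin

definition submult_norm :: "(real^'n^'n \<Rightarrow> real) \<Rightarrow> bool" where
  "submult_norm nrm \<longleftrightarrow>
     (\<forall>X. 0 \<le> nrm X) \<and>
     (\<forall>X. nrm X = 0 \<longleftrightarrow> X = 0) \<and>
     (\<forall>c X. nrm (c *\<^sub>R X) = \<bar>c\<bar> * nrm X) \<and>
     (\<forall>X Y. nrm (X + Y) \<le> nrm X + nrm Y) \<and>
     (\<forall>X Y. nrm (X ** Y) \<le> nrm X * nrm Y)"

fun prodAB :: "(nat \<Rightarrow> real^'m^'n) \<Rightarrow> (nat \<Rightarrow> real^'n^'m) \<Rightarrow> nat \<Rightarrow> real^'n^'n" where
  "prodAB A B 0 = mat 1"
| "prodAB A B (Suc n) = (A (Suc n) ** B (Suc n)) ** prodAB A B n"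

end

theory Submission
  imports Defs
begin

lemma prodAB_prefix:
  "(\<forall>i\<in>{1..n}. A i = A' i) \<Longrightarrow> prodAB A B n = prodAB A' B n"
  by (induction n) auto

definition goodk where
  "goodk \<B> nrm k A \<longleftrightarrow> (\<exists>n. 1 \<le> n \<and> n \<le> k \<and>
     (\<exists>B. (\<forall>i\<in>{1..n}. B i \<in> \<B>) \<and> nrm (prodAB A B n) \<le> (1/2::real)))"

lemma goodk_mono: "goodk \<B> nrm k A \<Longrightarrow> k \<le> k' \<Longrightarrow> goodk \<B> nrm k' A"
  unfolding goodk_def by (meson order_trans)

lemma goodk_prefix:
  assumes "goodk \<B> nrm k A" "\<forall>i\<in>{1..k}. A i = A' i"
  shows "goodk \<B> nrm k A'"
proof -
  obtain n B where "1 \<le> n" "n \<le> k" "\<forall>i\<in>{1..n}. B i \<in> \<B>" "nrm (prodAB A B n) \<le> 1/2"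
    using assms(1) unfolding goodk_def by blast
  moreover have "prodAB A B n = prodAB A' B n"
    using assms(2) \<open>n \<le> k\<close> by (intro prodAB_prefix) auto
  ultimately show ?thesis unfolding goodk_def by metis
qed

theorem lemma1:
  fixes \<A> :: "(real^'m^'n) set" and \<B> :: "(real^'n^'m) set"
    and nrm :: "real^'n^'n \<Rightarrow> real"
  assumes "finite \<A>" and "finite \<B>"
    and "submult_norm nrm"
    and "\<forall>A. (\<forall>n\<ge>1. A n \<in> \<A>) \<longrightarrow>
           (\<exists>B. (\<forall>n\<ge>1. B n \<in> \<B>) \<and> (\<lambda>n. nrm (prodAB A B n)) \<longlonglongrightarrow> 0)"
  shows "\<exists>kstar::nat. kstar \<ge> 1 \<and> (\<exists>\<mu>::real. 0 < \<mu> \<and> \<mu> < 1 \<and>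
           (\<forall>A. (\<forall>n\<ge>1. A n \<in> \<A>) \<longrightarrow>
              (\<exists>k. 1 \<le> k \<and> k \<le> kstar \<and>
                 (\<exists>B. (\<forall>n\<in>{1..k}. B n \<in> \<B>) \<and> nrm (prodAB A B k) \<le> \<mu>))))"
proof -
  define S where "S = {A::nat \<Rightarrow> real^'m^'n. \<forall>n\<ge>1. A n \<in> \<A>}"
  have ex_good: "\<exists>k. goodk \<B> nrm k A" if AinS: "A \<in> S" for A
  proof -
    obtain B where B: "\<forall>n\<ge>1. B n \<in> \<B>" "(\<lambda>n. nrm (prodAB A B n)) \<longlonglongrightarrow> 0"
      using assms(4) AinS unfolding S_def by blast
    have "eventually (\<lambda>n. nrm (prodAB A B n) < 1/2) sequentially"
      using order_tendstoD(2)[OF B(2), of "1/2"] by simp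
    then obtain N where N: "\<And>n. n \<ge> N \<Longrightarrow> nrm (prodAB A B n) < 1/2"
      unfolding eventually_sequentially by blast
    have "goodk \<B> nrm (Suc N) A"
      unfolding goodk_def
        apply (rule exI[of _ "Suc N"], simp)
        apply (rule exI[of _ B])
        using B(1) N[of "Suc N"] by auto
    then show ?thesis by blast
  qed
  have claim: "\<exists>k. \<forall>A\<in>S. goodk \<B> nrm k A"
  proof (rule ccontr)
    assume nc: "\<not> ?thesis"
    define P where "P = (\<lambda>m (p::nat \<Rightarrow> real^'m^'n). \<forall>k. \<exists>A\<in>S. (\<forall>i\<in>{1..m}. A i = p i) \<and> \<not> goodk \<B> nrm k A)"
    have P0: "P 0 p" for p using nc unfolding P_def by auto
    have step: "\<exists>a\<in>\<A>. P (Suc m) (p(Suc m := a))" if Pm: "P m p" for m p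
    proof (rule ccontr)
      assume "\<not> ?thesis"
      then have "\<forall>a\<in>\<A>. \<exists>k. \<forall>A\<in>S. (\<forall>i\<in>{1..Suc m}. A i = (p(Suc m := a)) i) \<longrightarrow> goodk \<B> nrm k A"
        unfolding P_def by blast
      then obtain K where K: "\<And>a A. a \<in> \<A> \<Longrightarrow> A \<in> S \<Longrightarrow> (\<forall>i\<in>{1..Suc m}. A i = (p(Suc m := a)) i) \<Longrightarrow> goodk \<B> nrm (K a) A"
        by metis
      define K0 where "K0 = Max (K ` \<A>)"
      obtain A where A: "A \<in> S" "\<forall>i\<in>{1..m}. A i = p i" "\<not> goodk \<B> nrm K0 A"
        using Pm unfolding P_def by blast
      have a: "A (Suc m) \<in> \<A>" using A(1) unfolding S_def by auto
      have "\<forall>i\<in>{1..Suc m}. A i = (p(Suc m := A (Suc m))) i"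
        using A(2) by (auto simp: le_Suc_eq)
      then have "goodk \<B> nrm (K (A (Suc m))) A" using K[OF a A(1)] by blast
      moreover have "K (A (Suc m)) \<le> K0" unfolding K0_def using a assms(1) by simp
      ultimately show False using A(3) goodk_mono by blast
    qed
    define ch where "ch = (\<lambda>m p. SOME a. a \<in> \<A> \<and> P (Suc m) (p(Suc m := a)))"
    define q where "q = rec_nat (\<lambda>_. undefined) (\<lambda>m p. p(Suc m := ch m p))"
    have q0: "q 0 = (\<lambda>_. undefined)" unfolding q_def by simp
    have qS: "q (Suc m) = (q m)(Suc m := ch m (q m))" for m unfolding q_def by simp
    have Pq: "P m (q m) \<and> (m \<ge> 1 \<longrightarrow> q m m \<in> \<A>)" for m
    proof (induction m)
      case 0 then show ?case using P0 by simp
    next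
      case (Suc m)
      have "\<exists>a. a \<in> \<A> \<and> P (Suc m) ((q m)(Suc m := a))" using step Suc.IH by blast
      then have "ch m (q m) \<in> \<A> \<and> P (Suc m) ((q m)(Suc m := ch m (q m)))"
        unfolding ch_def by (rule someI_ex)
      then show ?case by (simp only: qS) simp
    qed
    have qagree: "q (j + d) i = q i i" if "i \<le> j" for i j d
    proof (induction d)
      case 0
      show ?case using that
      proof (induction j)
        case 0 then show ?case by simp
      next
        case (Suc j)
        then show ?case by (cases "i = Suc j") (auto simp: qS)
      qed
    next
      case (Suc d)
      then show ?case using that by (simp add: qS)
    qed
    define A where "A = (\<lambda>i. q i i)"
    have AS: "A \<in> S" unfolding S_def A_def using Pq by auto
    obtain k where gk: "goodk \<B> nrm k A" using ex_good[OF AS] by blast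
    obtain A' where A': "A' \<in> S" "\<forall>i\<in>{1..k}. A' i = q k i" "\<not> goodk \<B> nrm k A'"
      using Pq[of k] unfolding P_def by blast
    have "\<forall>i\<in>{1..k}. A i = A' i"
      using A'(2) qagree[of _ k 0] unfolding A_def by auto
    then show False using goodk_prefix[OF gk] A'(3) by blast
  qed
  then obtain k where k: "\<forall>A\<in>S. goodk \<B> nrm k A" by blast
  have "\<forall>A. (\<forall>n\<ge>1. A n \<in> \<A>) \<longrightarrow> (\<exists>ka. 1 \<le> ka \<and> ka \<le> Suc k \<and> (\<exists>B. (\<forall>n\<in>{1..ka}. B n \<in> \<B>) \<and> nrm (prodAB A B ka) \<le> 1/2))"
  proof (intro allI impI)
    fix A :: "nat \<Rightarrow> real^'m^'n" assume "\<forall>n\<ge>1. A n \<in> \<A>"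
    then have "goodk \<B> nrm (Suc k) A" using k goodk_mono unfolding S_def by fastforce
    then show "\<exists>ka. 1 \<le> ka \<and> ka \<le> Suc k \<and> (\<exists>B. (\<forall>n\<in>{1..ka}. B n \<in> \<B>) \<and> nrm (prodAB A B ka) \<le> 1/2)"
      unfolding goodk_def by blast
  qed
  then show ?thesis by (intro exI[of _ "Suc k"] conjI exI[of _ "1/2::real"]) auto
qed

end
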